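(* Let $(\mathcal T,\{x_I\},\{r_I\})$ be a triple as below with $\mathcal T\subseteq\Sigma_N$ non-empty and closed and $s>0$. (a) If the triple is an $s$-tree (i.e. satisfies (T1)–(T5)), then it satisfies (T'3) with $E=1$. (b) Conversely, if the triple satisfies (T1), (T2), (T'3) (with some constant $E$), (T4), (T5), then there are numbers $\tilde r_I$, $I\in\mathcal T^*$, with $E^{-1/s}r_I\le\tilde r_I\le E^{1/s}r_I$ for all $I\in\mathcal T^*$, such that $(\mathcal T,\{x_I\},\{\tilde r_I\})$ satisfies (T1)–(T5) (with suitably modified constants), i.e. is an $s$-tree.
   Context: Words: $A_N=\{0,\dots,N-1\}$, $\Sigma_N=A_N^{\mathbb N}$ with product topology; for $\mathcal T\subseteq\Sigma_N$, $\mathcal T^*$ is the set of finite prefixes $\omega|_k$ ($k\ge0$) of elements of $\mathcal T$, $\mathcal T_k$ those of length $k$; $\prec$ is the prefix relation; $IJ$ concatenation; finite words $I,J$, $|I|\le|J|$, are incomparable if $I_k\ne J_k$ for some $k\le |I|$. Conditions for $x_I\in X$ ($X$ metric space), $0<r_I<\infty$, with constants $\rho,C,D\in(0,\infty)$: (T1) $d(x_I,x_J)\ge C(r_I+r_J)$ for incomparable $I,J\in\mathcal T^*$; (T2) $\operatorname{diam}\{x_{IJ}:IJ\in\mathcal T^*\}\le Dr_I$; (T3) $\sum_{|J|=n,\,IJ\in\mathcal T^*}r_{IJ}^s=r_I^s$ for all $I\in\mathcal T^*$, $n\ge0$; (T4) $r_I\to0$ as $|I|\to\infty$; (T5) $r_{Ij}\ge\rho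 r_I$ whenever $j\in A_N$, $Ij\in\mathcal T^*$. For $I\in\mathcal T^*$ and $n\ge0$ let $\mathcal T^n_I$ be the collection of all sets $\mathcal I\subseteq\bigcup_{k\ge n}\mathcal T_k$ such that every $\omega\in\mathcal T$ has exactly one $J\in\mathcal I$ with $J\prec\omega$, and some $J\in\mathcal I$ satisfies $I\prec J$. (T'3): there is $0<E<\infty$ such that for all $I\in\mathcal T^*$, $n\ge0$ and $\mathcal I\in\mathcal T^n_I$, $\frac1E r_I^s\le\sum_{J:\,IJ\in\mathcal I}r_{IJ}^s\le Er_I^s$. *)

theory Defs
  imports "HOL-Analysis.Analysis"
begin

text \<open>Infinite words over A_N = {0..<N}: functions nat => nat with values < N.
  The type nat => nat carries the product topology (Function_Topology), nat is discrete.\<close>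
definition SigmaN :: "nat \<Rightarrow> (nat \<Rightarrow> nat) set" where
  "SigmaN N = {\<omega>. \<forall>n. \<omega> n < N}"

definition restr :: "(nat \<Rightarrow> nat) \<Rightarrow> nat \<Rightarrow> nat list" where
  "restr \<omega> k = map \<omega> [0..<k]"

definition Tstar :: "(nat \<Rightarrow> nat) set \<Rightarrow> nat list set" where
  "Tstar T = {restr \<omega> k | \<omega> k. \<omega> \<in> T}"

definition Tlev :: "(nat \<Rightarrow> nat) set \<Rightarrow> nat \<Rightarrow> nat list set" where
  "Tlev T k = {I \<in> Tstar T. length I = k}"

definition pref_inf :: "nat list \<Rightarrow> (nat \<Rightarrow> nat) \<Rightarrow> bool" where
  "pref_inf I \<omega> \<longleftrightarrow> I = restr \<omega> (length I)"

definition pref :: "nat list \<Rightarrow> nat list \<Rightarrow> bool" where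
  "pref I J \<longleftrightarrow> (\<exists>K. J = I @ K)"

definition incomparable :: "nat list \<Rightarrow> nat list \<Rightarrow> bool" where
  "incomparable I J \<longleftrightarrow> (\<exists>k < min (length I) (length J). I ! k \<noteq> J ! k)"

definition T1 :: "(nat \<Rightarrow> nat) set \<Rightarrow> (nat list \<Rightarrow> 'a::metric_space) \<Rightarrow> (nat list \<Rightarrow> real) \<Rightarrow> real \<Rightarrow> bool" where
  "T1 T x r C \<longleftrightarrow> (\<forall>I\<in>Tstar T. \<forall>J\<in>Tstar T. incomparable I J \<longrightarrow> dist (x I) (x J) \<ge> C * (r I + r J))"

text \<open>diam {x_{IJ} : IJ in T^*} <= D r_I, written out via pairwise distances.\<close>
definition T2 :: "(nat \<Rightarrow> nat) set \<Rightarrow> (nat list \<Rightarrow> 'a::metric_space) \<Rightarrow> (nat list \<Rightarrow> real) \<Rightarrow> real \<Rightarrow> bool" where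
  "T2 T x r D \<longleftrightarrow> (\<forall>I\<in>Tstar T. \<forall>J K. I @ J \<in> Tstar T \<longrightarrow> I @ K \<in> Tstar T \<longrightarrow>
      dist (x (I @ J)) (x (I @ K)) \<le> D * r I)"

definition T3 :: "(nat \<Rightarrow> nat) set \<Rightarrow> (nat list \<Rightarrow> real) \<Rightarrow> real \<Rightarrow> bool" where
  "T3 T r s \<longleftrightarrow> (\<forall>I\<in>Tstar T. \<forall>n.
      (\<Sum>J\<in>{J. length J = n \<and> I @ J \<in> Tstar T}. r (I @ J) powr s) = r I powr s)"

definition T4 :: "(nat \<Rightarrow> nat) set \<Rightarrow> (nat list \<Rightarrow> real) \<Rightarrow> bool" where
  "T4 T r \<longleftrightarrow> (\<forall>\<epsilon>>0. \<exists>k. \<forall>I\<in>Tstar T. length I \<ge> k \<longrightarrow> r I < \<epsilon>)"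

definition T5 :: "nat \<Rightarrow> (nat \<Rightarrow> nat) set \<Rightarrow> (nat list \<Rightarrow> real) \<Rightarrow> real \<Rightarrow> bool" where
  "T5 N T r \<rho> \<longleftrightarrow> (\<forall>I j. j < N \<longrightarrow> I @ [j] \<in> Tstar T \<longrightarrow> r (I @ [j]) \<ge> \<rho> * r I)"

definition cuts :: "(nat \<Rightarrow> nat) set \<Rightarrow> nat list \<Rightarrow> nat \<Rightarrow> nat list set set" where
  "cuts T I n = {\<I>. \<I> \<subseteq> (\<Union>k\<in>{n..}. Tlev T k)
      \<and> (\<forall>\<omega>\<in>T. \<exists>!J. J \<in> \<I> \<and> pref_inf J \<omega>)
      \<and> (\<exists>J\<in>\<I>. pref I J)}"

definition T3' :: "(nat \<Rightarrow> nat) set \<Rightarrow> (nat list \<Rightarrow> real) \<Rightarrow> real \<Rightarrow> real \<Rightarrow> bool" where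
  "T3' T r s E \<longleftrightarrow> (\<forall>I\<in>Tstar T. \<forall>n. \<forall>\<I>\<in>cuts T I n.
      (1 / E) * r I powr s \<le> (\<Sum>J\<in>{J. I @ J \<in> \<I>}. r (I @ J) powr s)
      \<and> (\<Sum>J\<in>{J. I @ J \<in> \<I>}. r (I @ J) powr s) \<le> E * r I powr s)"

definition s_tree :: "nat \<Rightarrow> (nat \<Rightarrow> nat) set \<Rightarrow> (nat list \<Rightarrow> 'a::metric_space) \<Rightarrow> (nat list \<Rightarrow> real) \<Rightarrow> real \<Rightarrow> bool" where
  "s_tree N T x r s \<longleftrightarrow> (\<forall>I\<in>Tstar T. 0 < r I) \<and>
     (\<exists>\<rho> C D. \<rho> > 0 \<and> C > 0 \<and> D > 0 \<and>
        T1 T x r C \<and> T2 T x r D \<and> T3 T r s \<and> T4 T r \<and> T5 N T r \<rho>)"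

end

theory Submission
  imports Defs
begin


lemma restr_len[simp]: "length (restr \<omega> k) = k" by (simp add: restr_def)

lemma take_restr: "n \<le> k \<Longrightarrow> take n (restr \<omega> k) = restr \<omega> n"
  by (simp add: restr_def take_map)

lemma prefix_closed: "I @ J \<in> Tstar T \<Longrightarrow> I \<in> Tstar T"
proof -
  assume "I @ J \<in> Tstar T"
  then obtain \<omega> k where w: "\<omega> \<in> T" "I @ J = restr \<omega> k" by (auto simp: Tstar_def)
  then have "I = take (length I) (restr \<omega> k)" by (metis append_eq_conv_conj)
  also have "\<dots> = restr \<omega> (length I)" using w by (metis le_add1 length_append restr_len take_restr)
  finally show ?thesis using w(1) by (auto simp: Tstar_def)
qed

lemma Tstar_ex: "I \<in> Tstar T \<Longrightarrow> \<exists>\<omega>\<in>T. pref_inf I \<omega>"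
  by (auto simp: Tstar_def pref_inf_def)

lemma restr_Tstar: "\<omega> \<in> T \<Longrightarrow> restr \<omega> k \<in> Tstar T"
  by (auto simp: Tstar_def)

lemma pref_inf_app: "pref_inf (I @ K) \<omega> \<Longrightarrow> pref_inf I \<omega>"
  unfolding pref_inf_def by (metis append_eq_conv_conj le_add1 length_append restr_len take_restr)

lemma pref_inf_le: "pref_inf I \<omega> \<Longrightarrow> pref_inf J \<omega> \<Longrightarrow> length I \<le> length J \<Longrightarrow> \<exists>K. J = I @ K"
  unfolding pref_inf_def by (metis append_take_drop_id take_restr)

lemma Tstar_bound: "T \<subseteq> SigmaN N \<Longrightarrow> I \<in> Tstar T \<Longrightarrow> set I \<subseteq> {..<N}"
proof -
  assume a: "T \<subseteq> SigmaN N" "I \<in> Tstar T"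
  then obtain \<omega> k where "\<omega> \<in> T" "I = restr \<omega> k" by (auto simp: Tstar_def)
  moreover then have "\<forall>n. \<omega> n < N" using a by (auto simp: SigmaN_def)
  ultimately show ?thesis by (auto simp: restr_def)
qed

definition desc :: "(nat \<Rightarrow> nat) set \<Rightarrow> nat list \<Rightarrow> nat \<Rightarrow> nat list set" where
  "desc T I n = {J. length J = n \<and> I @ J \<in> Tstar T}"

lemma finite_desc: "T \<subseteq> SigmaN N \<Longrightarrow> finite (desc T I n)"
proof -
  assume a: "T \<subseteq> SigmaN N"
  have "desc T I n \<subseteq> {xs. set xs \<subseteq> {..<N} \<and> length xs = n}"
  proof
    fix x assume "x \<in> desc T I n"
    then have "length x = n" "I @ x \<in> Tstar T" by (auto simp: desc_def)
    moreover from this(2) have "set (I @ x) \<subseteq> {..<N}" by (rule Tstar_bound[OF a])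
    ultimately show "x \<in> {xs. set xs \<subseteq> {..<N} \<and> length xs = n}" by auto
  qed
  then show ?thesis by (rule finite_subset) (simp add: finite_lists_length_eq)
qed

lemma split_sum:
  assumes "T \<subseteq> SigmaN N"
  shows "(\<Sum>K\<in>desc T I (n+m). g (I @ K)) = (\<Sum>J\<in>desc T I n. \<Sum>L\<in>desc T (I@J) m. g (I @ J @ L))"
proof -
  let ?S = "Sigma (desc T I n) (\<lambda>J. desc T (I@J) m)"
  have "(\<Sum>J\<in>desc T I n. \<Sum>L\<in>desc T (I@J) m. g (I @ J @ L)) = (\<Sum>p\<in>?S. g (I @ fst p @ snd p))"
  proof -
    have "(\<Sum>J\<in>desc T I n. \<Sum>L\<in>desc T (I@J) m. g (I @ J @ L)) = (\<Sum>p\<in>?S. case_prod (\<lambda>J L. g (I @ J @ L)) p)"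
      by (rule sum.Sigma) (simp_all add: finite_desc[OF assms])
    then show ?thesis by (simp only: case_prod_unfold)
  qed
  also have "\<dots> = (\<Sum>K\<in>(\<lambda>p. fst p @ snd p) ` ?S. g (I @ K))"
  proof (rule sum.reindex[symmetric, unfolded comp_def])
    show "inj_on (\<lambda>p. fst p @ snd p) ?S"
    proof (rule inj_onI)
      fix p q assume pq: "p \<in> ?S" "q \<in> ?S" "fst p @ snd p = fst q @ snd q"
      from pq(1) have "fst p \<in> desc T I n" by (auto simp: mem_Times_iff)
      moreover from pq(2) have "fst q \<in> desc T I n" by (auto simp: mem_Times_iff)
      ultimately have "length (fst p) = length (fst q)" by (simp add: desc_def)
      then have "fst p = fst q" "snd p = snd q" using pq(3) append_eq_append_conv by blast+
      then show "p = q" by (rule prod_eqI)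
    qed
  qed
  finally have eq: "(\<Sum>J\<in>desc T I n. \<Sum>L\<in>desc T (I@J) m. g (I @ J @ L)) = (\<Sum>K\<in>(\<lambda>p. fst p @ snd p) ` ?S. g (I @ K))" .
  have img: "(\<lambda>p. fst p @ snd p) ` ?S = desc T I (n+m)"
  proof
    show "(\<lambda>p. fst p @ snd p) ` ?S \<subseteq> desc T I (n+m)" by (auto simp: desc_def)
    show "desc T I (n+m) \<subseteq> (\<lambda>p. fst p @ snd p) ` ?S"
    proof
      fix K assume K: "K \<in> desc T I (n+m)"
      then have K1: "(I @ take n K) @ drop n K \<in> Tstar T" "length K = n+m" by (simp_all add: desc_def)
      have "I @ take n K \<in> Tstar T" by (rule prefix_closed[OF K1(1)])
      then have "take n K \<in> desc T I n" using K1(2) by (simp add: desc_def)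
      moreover have "drop n K \<in> desc T (I @ take n K) m" using K1 by (simp add: desc_def)
      ultimately have "(take n K, drop n K) \<in> ?S" by simp
      then show "K \<in> (\<lambda>p. fst p @ snd p) ` ?S" by (rule rev_image_eqI) simp
    qed
  qed
  show ?thesis using eq unfolding img by simp
qed



definition cyl :: "nat list \<Rightarrow> (nat \<Rightarrow> nat) set" where
  "cyl J = {\<omega>. \<forall>i\<in>{..<length J}. \<omega> (id i) \<in> {J!i}}"

lemma open_cyl: "open (cyl J)"
  unfolding cyl_def
proof (rule product_topology_basis')
  show "finite {..<length J}" by simp
  fix i show "open {J ! i}" by (rule open_discrete)
qed

lemma pref_inf_cyl: "pref_inf J \<omega> \<longleftrightarrow> \<omega> \<in> cyl J"
proof -
  have "pref_inf J \<omega> \<longleftrightarrow> (\<forall>i<length J. J ! i = \<omega> i)"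
    unfolding pref_inf_def restr_def
  proof
    assume "J = map \<omega> [0..<length J]"
    then show "\<forall>i<length J. J ! i = \<omega> i" by (metis add_0 diff_zero nth_map_upt)
  next
    assume "\<forall>i<length J. J ! i = \<omega> i"
    then show "J = map \<omega> [0..<length J]" by (intro nth_equalityI) auto
  qed
  also have "\<dots> \<longleftrightarrow> \<omega> \<in> cyl J" unfolding cyl_def by auto
  finally show ?thesis .
qed

lemma compact_SigmaN: "compact (SigmaN N)"
proof -
  have eq: "SigmaN N = PiE UNIV (\<lambda>_. {..<N})"
    by (auto simp: SigmaN_def PiE_def Pi_def)
  have "compactin (product_topology (\<lambda>_::nat. (euclidean :: nat topology)) UNIV) (PiE UNIV (\<lambda>_. {..<N}))"
    by (simp add: compactin_PiE finite_imp_compact)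
  then show ?thesis unfolding eq euclidean_product_topology by simp
qed

lemma cut_Tstar: "\<I> \<in> cuts T I n \<Longrightarrow> J \<in> \<I> \<Longrightarrow> J \<in> Tstar T"
  unfolding cuts_def Tlev_def by blast

lemma cut_unique: "\<I> \<in> cuts T I n \<Longrightarrow> \<omega> \<in> T \<Longrightarrow> J1 \<in> \<I> \<Longrightarrow> J2 \<in> \<I> \<Longrightarrow> pref_inf J1 \<omega> \<Longrightarrow> pref_inf J2 \<omega> \<Longrightarrow> J1 = J2"
  unfolding cuts_def by blast

lemma cut_anti: 
  assumes "\<I> \<in> cuts T I n" "J \<in> \<I>" "J @ X \<in> \<I>" shows "X = []"
proof -
  obtain \<omega> where w: "\<omega> \<in> T" "pref_inf (J @ X) \<omega>" using Tstar_ex[OF cut_Tstar[OF assms(1,3)]] by blast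
  have "J = J @ X" by (rule cut_unique[OF assms(1) w(1) assms(2,3) pref_inf_app[OF w(2)] w(2)])
  then show ?thesis by simp
qed

lemma cut_finite:
  assumes "T \<subseteq> SigmaN N" "closed T" "\<I> \<in> cuts T I n"
  shows "finite \<I>"
proof -
  have c: "compact T" using compact_Int_closed[OF compact_SigmaN assms(2)] assms(1)
    by (metis inf.absorb_iff2)
  have cov: "T \<subseteq> (\<Union>J\<in>\<I>. cyl J)"
  proof
    fix \<omega> assume "\<omega> \<in> T"
    then obtain J where "J \<in> \<I>" "pref_inf J \<omega>" using assms(3) unfolding cuts_def by blast
    then show "\<omega> \<in> (\<Union>J\<in>\<I>. cyl J)" by (auto simp: pref_inf_cyl)
  qed
  obtain C where C: "C \<subseteq> \<I>" "finite C" "T \<subseteq> (\<Union>J\<in>C. cyl J)"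
    using compactE_image[OF c open_cyl cov] by blast
  have "\<I> \<subseteq> C"
  proof
    fix J assume J: "J \<in> \<I>"
    obtain \<omega> where w: "\<omega> \<in> T" "pref_inf J \<omega>" using Tstar_ex[OF cut_Tstar[OF assms(3) J]] by blast
    then obtain J' where J': "J' \<in> C" "\<omega> \<in> cyl J'" using C(3) by blast
    have "J' = J" by (rule cut_unique[OF assms(3) w(1)]) (use J' C(1) J w in \<open>auto simp: pref_inf_cyl\<close>)
    then show "J \<in> C" using J' by simp
  qed
  then show ?thesis using C(2) by (rule finite_subset)
qed



lemma partA:
  assumes TS: "T \<subseteq> SigmaN N" and cl: "closed T" and t3: "T3 T r s"
    and I: "I \<in> Tstar T" and cut: "\<I> \<in> cuts T I n"
  shows "(\<Sum>J\<in>{J. I @ J \<in> \<I>}. r (I @ J) powr s) = r I powr s"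
proof -
  define A where "A = {J. I @ J \<in> \<I>}"
  have "A = (\<lambda>J. I @ J) -` \<I>" by (auto simp: A_def)
  moreover have "finite ((\<lambda>J. I @ J) -` \<I>)"
    by (rule finite_vimageI[OF cut_finite[OF TS cl cut]]) (simp add: inj_def)
  ultimately have finA: "finite A" by simp
  obtain J0 where J0: "J0 \<in> \<I>" "pref I J0" using cut unfolding cuts_def by blast
  then obtain K0 where K0: "J0 = I @ K0" unfolding pref_def by blast
  have K0A: "K0 \<in> A" using J0 K0 by (simp add: A_def)
  define M where "M = Max (length ` A)"
  have leM: "length K \<le> M" if "K \<in> A" for K unfolding M_def using finA that by simp
  let ?g = "\<lambda>P. r P powr s"
  let ?S = "Sigma A (\<lambda>K. desc T (I@K) (M - length K))"
  have s1: "(\<Sum>K\<in>A. ?g (I @ K)) = (\<Sum>K\<in>A. \<Sum>L\<in>desc T (I@K) (M - length K). ?g (I @ K @ L))"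
  proof (rule sum.cong[OF refl])
    fix K assume "K \<in> A"
    then have "I @ K \<in> Tstar T" using cut_Tstar[OF cut] by (simp add: A_def)
    then have "(\<Sum>L\<in>{J. length J = M - length K \<and> (I @ K) @ J \<in> Tstar T}. ?g ((I @ K) @ L)) = ?g (I @ K)"
      using t3 unfolding T3_def by blast
    then show "?g (I @ K) = (\<Sum>L\<in>desc T (I@K) (M - length K). ?g (I @ K @ L))"
      by (simp add: desc_def)
  qed
  have s2: "(\<Sum>K\<in>A. \<Sum>L\<in>desc T (I@K) (M - length K). ?g (I @ K @ L)) = (\<Sum>p\<in>?S. ?g (I @ fst p @ snd p))"
  proof -
    have "(\<Sum>K\<in>A. \<Sum>L\<in>desc T (I@K) (M - length K). ?g (I @ K @ L)) = (\<Sum>p\<in>?S. case_prod (\<lambda>K L. ?g (I @ K @ L)) p)"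
      by (rule sum.Sigma) (simp_all add: finA finite_desc[OF TS])
    then show ?thesis by (simp only: case_prod_unfold)
  qed
  have inj: "inj_on (\<lambda>p. fst p @ snd p) ?S"
  proof (rule inj_onI)
    fix p q assume pq: "p \<in> ?S" "q \<in> ?S" "fst p @ snd p = fst q @ snd q"
    from pq(1) have p1: "I @ fst p \<in> \<I>" by (auto simp: mem_Times_iff A_def)
    from pq(2) have q1: "I @ fst q \<in> \<I>" by (auto simp: mem_Times_iff A_def)
    from pq(3) obtain us where "fst p = fst q @ us \<and> us @ snd p = snd q \<or> fst p @ us = fst q \<and> snd p = us @ snd q"
      using append_eq_append_conv2[THEN iffD1, OF pq(3)] by blast
    then have "fst p = fst q \<and> snd p = snd q"
    proof
      assume h: "fst p = fst q @ us \<and> us @ snd p = snd q"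
      then have "(I @ fst q) @ us \<in> \<I>" using p1 by simp
      then have "us = []" by (rule cut_anti[OF cut q1])
      then show ?thesis using h by simp
    next
      assume h: "fst p @ us = fst q \<and> snd p = us @ snd q"
      then have "(I @ fst p) @ us \<in> \<I>" using q1 by simp
      then have "us = []" by (rule cut_anti[OF cut p1])
      then show ?thesis using h by simp
    qed
    then show "p = q" by (simp add: prod_eq_iff)
  qed
  have s3: "(\<Sum>p\<in>?S. ?g (I @ fst p @ snd p)) = (\<Sum>P\<in>(\<lambda>p. fst p @ snd p) ` ?S. ?g (I @ P))"
    by (rule sum.reindex[symmetric, unfolded comp_def, OF inj])
  have img: "(\<lambda>p. fst p @ snd p) ` ?S = desc T I M"
  proof
    show "(\<lambda>p. fst p @ snd p) ` ?S \<subseteq> desc T I M"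
    proof
      fix P assume "P \<in> (\<lambda>p. fst p @ snd p) ` ?S"
      then obtain K L where KL: "K \<in> A" "L \<in> desc T (I@K) (M - length K)" "P = K @ L" by auto
      then have "length K \<le> M" by (simp add: leM)
      then show "P \<in> desc T I M" using KL by (simp add: desc_def)
    qed
    show "desc T I M \<subseteq> (\<lambda>p. fst p @ snd p) ` ?S"
    proof
      fix P assume P: "P \<in> desc T I M"
      then have P1: "I @ P \<in> Tstar T" "length P = M" by (simp_all add: desc_def)
      obtain \<omega> where w: "\<omega> \<in> T" "pref_inf (I @ P) \<omega>" using Tstar_ex[OF P1(1)] by blast
      have wI: "pref_inf I \<omega>" by (rule pref_inf_app[OF w(2)])
      obtain J where J: "J \<in> \<I>" "pref_inf J \<omega>" using cut w(1) unfolding cuts_def by blast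
      have "length I \<le> length J"
      proof (rule ccontr)
        assume "\<not> length I \<le> length J"
        then have "length J \<le> length I" by simp
        then obtain Y where Y: "I = J @ Y" using pref_inf_le[OF J(2) wI] by blast
        then have "Y \<noteq> []" using \<open>\<not> length I \<le> length J\<close> by auto
        have "J @ (Y @ K0) \<in> \<I>" using J0(1) K0 Y by simp
        then have "Y @ K0 = []" by (rule cut_anti[OF cut J(1)])
        then show False using \<open>Y \<noteq> []\<close> by simp
      qed
      then obtain K where K: "J = I @ K" using pref_inf_le[OF wI J(2)] by blast
      have KA: "K \<in> A" using J(1) K by (simp add: A_def)
      have "length (I @ K) \<le> length (I @ P)" using leM[OF KA] P1(2) by simp
      then obtain L where L: "I @ P = (I @ K) @ L" using pref_inf_le[OF _ w(2)] J(2) K by blast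
      then have PKL: "P = K @ L" by simp
      have "L \<in> desc T (I@K) (M - length K)" using L P1 PKL by (simp add: desc_def)
      then have "(K, L) \<in> ?S" using KA by simp
      then show "P \<in> (\<lambda>p. fst p @ snd p) ` ?S" by (rule rev_image_eqI) (simp add: PKL)
    qed
  qed
  have s5: "(\<Sum>P\<in>desc T I M. ?g (I @ P)) = ?g I"
    using t3 I unfolding T3_def desc_def by blast
  have "(\<Sum>K\<in>A. ?g (I @ K)) = ?g I"
    using s1 s2 s3 s5 unfolding img by simp
  then show ?thesis by (simp add: A_def)
qed

lemma partA': 
  assumes "T \<subseteq> SigmaN N" "closed T" "s_tree N T x r s"
  shows "T3' T r s 1"
proof -
  have t3: "T3 T r s" using assms(3) unfolding s_tree_def by blast
  show ?thesis unfolding T3'_def using partA[OF assms(1,2) t3] by simp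
qed



definition bsum :: "(nat \<Rightarrow> nat) set \<Rightarrow> (nat list \<Rightarrow> real) \<Rightarrow> real \<Rightarrow> nat \<Rightarrow> nat list \<Rightarrow> real" where
  "bsum T r s m I = (\<Sum>K\<in>desc T I (m - length I). r (I @ K) powr s)"

lemma lev_cut:
  assumes "I \<in> Tstar T" "length I \<le> m"
  shows "Tlev T m \<in> cuts T I 0"
proof -
  have "Tlev T m \<subseteq> (\<Union>k\<in>{0..}. Tlev T k)" by blast
  moreover have "\<forall>\<omega>\<in>T. \<exists>!J. J \<in> Tlev T m \<and> pref_inf J \<omega>"
  proof
    fix \<omega> assume w: "\<omega> \<in> T"
    show "\<exists>!J. J \<in> Tlev T m \<and> pref_inf J \<omega>"
    proof (rule ex1I[of _ "restr \<omega> m"])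
      show "restr \<omega> m \<in> Tlev T m \<and> pref_inf (restr \<omega> m) \<omega>"
        using w by (simp add: Tlev_def restr_Tstar pref_inf_def)
      fix J assume "J \<in> Tlev T m \<and> pref_inf J \<omega>"
      then have "length J = m" "J = restr \<omega> (length J)" unfolding Tlev_def pref_inf_def by blast+
      then show "J = restr \<omega> m" by metis
    qed
  qed
  moreover have "\<exists>J\<in>Tlev T m. pref I J"
  proof -
    obtain \<omega> where w: "\<omega> \<in> T" "pref_inf I \<omega>" using Tstar_ex[OF assms(1)] by blast
    have "pref_inf (restr \<omega> m) \<omega>" by (simp add: pref_inf_def)
    moreover have "length I \<le> length (restr \<omega> m)" using assms(2) by simp
    ultimately obtain K where "restr \<omega> m = I @ K" using pref_inf_le[OF w(2)] by blast
    moreover have "restr \<omega> m \<in> Tlev T m" using w by (simp add: Tlev_def restr_Tstar)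
    ultimately show ?thesis unfolding pref_def by metis
  qed
  ultimately show ?thesis unfolding cuts_def by blast
qed

lemma lev_set: "length I \<le> m \<Longrightarrow> {J. I @ J \<in> Tlev T m} = desc T I (m - length I)"
  unfolding Tlev_def desc_def by (intro Collect_cong) (simp, linarith)

lemma bsum_bounds:
  assumes "T3' T r s E" "I \<in> Tstar T" "length I \<le> m"
  shows "1 / E * r I powr s \<le> bsum T r s m I \<and> bsum T r s m I \<le> E * r I powr s"
proof -
  have c: "Tlev T m \<in> cuts T I 0" by (rule lev_cut[OF assms(2,3)])
  have "1 / E * r I powr s \<le> (\<Sum>J\<in>{J. I @ J \<in> Tlev T m}. r (I @ J) powr s)
      \<and> (\<Sum>J\<in>{J. I @ J \<in> Tlev T m}. r (I @ J) powr s) \<le> E * r I powr s"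
    using assms(1) unfolding T3'_def using assms(2) c by blast
  then show ?thesis unfolding bsum_def lev_set[OF assms(3)] .
qed

lemma bsum_out: "I \<notin> Tstar T \<Longrightarrow> bsum T r s m I = 0"
proof -
  assume a: "I \<notin> Tstar T"
  have "desc T I (m - length I) = {}"
  proof (rule ccontr)
    assume "desc T I (m - length I) \<noteq> {}"
    then obtain K where "I @ K \<in> Tstar T" unfolding desc_def by blast
    then show False using a prefix_closed by blast
  qed
  then show ?thesis unfolding bsum_def by simp
qed

lemma bsum_add:
  assumes TS: "T \<subseteq> SigmaN N" and m: "length I + n \<le> m"
  shows "bsum T r s m I = (\<Sum>J\<in>desc T I n. bsum T r s m (I @ J))"
proof -
  have e: "m - length I = n + (m - length I - n)" using m by simp
  have "bsum T r s m I = (\<Sum>K\<in>desc T I (n + (m - length I - n)). r (I @ K) powr s)"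
    unfolding bsum_def by (simp only: e[symmetric])
  also have "\<dots> = (\<Sum>J\<in>desc T I n. \<Sum>L\<in>desc T (I@J) (m - length I - n). r (I @ J @ L) powr s)"
    by (rule split_sum[OF TS])
  also have "\<dots> = (\<Sum>J\<in>desc T I n. bsum T r s m (I @ J))"
  proof (rule sum.cong[OF refl])
    fix J assume "J \<in> desc T I n"
    then have "length J = n" by (simp add: desc_def)
    then have "m - length (I @ J) = m - length I - n" by simp
    then show "(\<Sum>L\<in>desc T (I@J) (m - length I - n). r (I @ J @ L) powr s) = bsum T r s m (I @ J)"
      unfolding bsum_def by simp
  qed
  finally show ?thesis .
qed



lemma limit_exists:
  assumes TS: "T \<subseteq> SigmaN N" and t3: "T3' T r s E" and E: "0 < E"
  obtains \<nu> :: "nat list \<Rightarrow> real" where "\<And>I. 0 \<le> \<nu> I"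
    "\<And>I. I \<in> Tstar T \<Longrightarrow> 1 / E * r I powr s \<le> \<nu> I \<and> \<nu> I \<le> E * r I powr s"
    "\<And>I n. \<nu> I = (\<Sum>J\<in>desc T I n. \<nu> (I @ J))"
proof -
  define f where "f m I = bsum T r s (max m (length I)) I" for m I
  define S :: "(nat list \<Rightarrow> real) set" where "S = PiE UNIV (\<lambda>I. {0 .. E * r I powr s})"
  have fb: "0 \<le> f m I \<and> f m I \<le> E * r I powr s" for m I
  proof (cases "I \<in> Tstar T")
    case True
    have "1 / E * r I powr s \<le> f m I \<and> f m I \<le> E * r I powr s"
      unfolding f_def by (rule bsum_bounds[OF t3 True]) simp
    moreover have "0 \<le> 1 / E * r I powr s" using E by simp
    ultimately show ?thesis by linarith
  next
    case False
    then show ?thesis using E by (simp add: f_def bsum_out)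
  qed
  have fS: "\<forall>m. f m \<in> S" using fb by (simp add: S_def PiE_iff)
  have "compactin (product_topology (\<lambda>_. euclidean) UNIV) S"
    unfolding S_def by (simp add: compactin_PiE)
  then have "compact S" unfolding euclidean_product_topology by simp
  then have "seq_compact S" by (rule compact_imp_seq_compact)
  then obtain \<nu> \<phi> where nu: "\<nu> \<in> S" "strict_mono \<phi>" "(f \<circ> \<phi>) \<longlonglongrightarrow> \<nu>"
    using seq_compactE[OF _ fS] by blast
  have pw: "(\<lambda>k. f (\<phi> k) I) \<longlonglongrightarrow> \<nu> I" for I
  proof -
    have c: "continuous_on UNIV (\<lambda>x::nat list \<Rightarrow> real. x I)" by (rule continuous_on_product_coordinates)
    have "isCont (\<lambda>x::nat list \<Rightarrow> real. x I) \<nu>"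
      by (rule continuous_on_eq_continuous_at[OF open_UNIV, THEN iffD1, OF c, rule_format]) simp
    from isCont_tendsto_compose[OF this nu(3)] show ?thesis by (simp only: comp_def)
  qed
  show ?thesis
  proof
    fix I show "0 \<le> \<nu> I" using nu(1) by (simp add: S_def PiE_iff)
  next
    fix I assume I: "I \<in> Tstar T"
    have b: "1 / E * r I powr s \<le> f m I \<and> f m I \<le> E * r I powr s" for m
      unfolding f_def by (rule bsum_bounds[OF t3 I]) simp
    have "1 / E * r I powr s \<le> \<nu> I"
      by (rule tendsto_lowerbound[OF pw]) (use b in auto)
    moreover have "\<nu> I \<le> E * r I powr s"
      by (rule tendsto_upperbound[OF pw]) (use b in auto)
    ultimately show "1 / E * r I powr s \<le> \<nu> I \<and> \<nu> I \<le> E * r I powr s" ..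
  next
    fix I n
    have lim2: "(\<lambda>k. \<Sum>J\<in>desc T I n. f (\<phi> k) (I @ J)) \<longlonglongrightarrow> (\<Sum>J\<in>desc T I n. \<nu> (I @ J))"
      by (intro tendsto_sum pw)
    have ev: "eventually (\<lambda>k. (\<Sum>J\<in>desc T I n. f (\<phi> k) (I @ J)) = f (\<phi> k) I) sequentially"
    proof (rule eventually_sequentiallyI[of "length I + n"])
      fix k assume k: "length I + n \<le> k"
      have pk: "k \<le> \<phi> k" by (rule seq_suble[OF nu(2)])
      have "length I \<le> \<phi> k" using k pk by linarith
      then have "f (\<phi> k) I = bsum T r s (\<phi> k) I" unfolding f_def by (simp add: max_absorb1)
      also have "\<dots> = (\<Sum>J\<in>desc T I n. bsum T r s (\<phi> k) (I @ J))"
        by (rule bsum_add[OF TS]) (use k pk in linarith)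
      also have "\<dots> = (\<Sum>J\<in>desc T I n. f (\<phi> k) (I @ J))"
      proof (rule sum.cong[OF refl])
        fix J assume "J \<in> desc T I n"
        then have "length J = n" by (simp add: desc_def)
        then have "length (I @ J) \<le> \<phi> k" using k pk by simp
        then show "bsum T r s (\<phi> k) (I @ J) = f (\<phi> k) (I @ J)"
          unfolding f_def by (simp add: max_absorb1)
      qed
      finally show "(\<Sum>J\<in>desc T I n. f (\<phi> k) (I @ J)) = f (\<phi> k) I" by simp
    qed
    have "(\<lambda>k. f (\<phi> k) I) \<longlonglongrightarrow> (\<Sum>J\<in>desc T I n. \<nu> (I @ J))"
      by (rule Lim_transform_eventually[OF lim2 ev])
    then show "\<nu> I = (\<Sum>J\<in>desc T I n. \<nu> (I @ J))" using pw LIMSEQ_unique by blast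
  qed
qed



lemma partB:
  fixes x :: "nat list \<Rightarrow> 'a::metric_space"
  assumes TS: "T \<subseteq> SigmaN N" and s: "0 < s" and pos: "\<forall>I\<in>Tstar T. 0 < r I"
    and \<rho>: "0 < \<rho>" and C: "0 < C" and D: "0 < D" and E: "0 < E"
    and t1: "T1 T x r C" and t2: "T2 T x r D" and t3: "T3' T r s E" and t4: "T4 T r" and t5: "T5 N T r \<rho>"
  shows "\<exists>r'. (\<forall>I\<in>Tstar T. E powr (-1/s) * r I \<le> r' I \<and> r' I \<le> E powr (1/s) * r I)
              \<and> s_tree N T x r' s"
proof -
  obtain \<nu> :: "nat list \<Rightarrow> real" where nu0: "\<And>I. 0 \<le> \<nu> I"
    and nub: "\<And>I. I \<in> Tstar T \<Longrightarrow> 1 / E * r I powr s \<le> \<nu> I \<and> \<nu> I \<le> E * r I powr s"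
    and nuadd: "\<And>I n. \<nu> I = (\<Sum>J\<in>desc T I n. \<nu> (I @ J))"
    using limit_exists[OF TS t3 E] by blast
  define r' where "r' I = \<nu> I powr (1/s)" for I
  define a where "a = E powr (1/s)"
  have a: "0 < a" using E by (simp add: a_def)
  have am: "E powr (-1/s) = 1 / a"
  proof -
    have "-1/s = -(1/s)" by simp
    then show ?thesis unfolding a_def by (simp only: powr_minus_divide)
  qed
  have rs: "r' I powr s = \<nu> I" for I
  proof -
    have "r' I powr s = \<nu> I powr (1/s * s)" unfolding r'_def by (rule powr_powr)
    also have "1/s * s = 1" using s by simp
    finally show ?thesis using nu0[of I] by simp
  qed
  have rpp: "(r I powr s) powr (1/s) = r I" if "I \<in> Tstar T" for I
  proof -
    have "(r I powr s) powr (1/s) = r I powr (s * (1/s))" by (rule powr_powr)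
    also have "s * (1/s) = 1" using s by simp
    finally have "(r I powr s) powr (1/s) = \<bar>r I\<bar>" by simp
    moreover have "0 < r I" using pos that by blast
    ultimately show ?thesis by simp
  qed
  have lo: "r I / a \<le> r' I" and hi: "r' I \<le> a * r I" if I: "I \<in> Tstar T" for I
  proof -
    have b: "1 / E * r I powr s \<le> \<nu> I" "\<nu> I \<le> E * r I powr s" using nub[OF I] by auto
    have "(1 / E * r I powr s) powr (1/s) \<le> \<nu> I powr (1/s)"
      by (rule powr_mono2) (use s E b in auto)
    moreover have "(1 / E * r I powr s) powr (1/s) = r I / a"
      by (simp add: powr_mult powr_divide rpp[OF I] a_def)
    ultimately show "r I / a \<le> r' I" by (simp add: r'_def)
    have "\<nu> I powr (1/s) \<le> (E * r I powr s) powr (1/s)"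
      by (rule powr_mono2) (use s nu0 b in auto)
    moreover have "(E * r I powr s) powr (1/s) = a * r I"
      by (simp add: powr_mult rpp[OF I] a_def)
    ultimately show "r' I \<le> a * r I" by (simp add: r'_def)
  qed
  have lo': "r' I / a \<le> r I" if "I \<in> Tstar T" for I
    using hi[OF that] a by (simp add: divide_le_eq mult.commute)
  have hi': "r I \<le> a * r' I" if "I \<in> Tstar T" for I
    using lo[OF that] a by (simp add: divide_le_eq mult.commute)
  have r'pos: "0 < r' I" if I: "I \<in> Tstar T" for I
  proof -
    have "0 < r I / a" using pos I a by simp
    then show ?thesis using lo[OF I] by linarith
  qed
  have T1': "T1 T x r' (C / a)"
    unfolding T1_def
  proof (intro ballI impI)
    fix I J assume IJ: "I \<in> Tstar T" "J \<in> Tstar T" "incomparable I J"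
    have "C / a * (r' I + r' J) = C * (r' I / a + r' J / a)" using a by (simp add: field_simps)
    also have "\<dots> \<le> C * (r I + r J)"
      using lo'[OF IJ(1)] lo'[OF IJ(2)] C by (intro mult_left_mono) auto
    also have "\<dots> \<le> dist (x I) (x J)" using t1 IJ unfolding T1_def by blast
    finally show "C / a * (r' I + r' J) \<le> dist (x I) (x J)" .
  qed
  have T2': "T2 T x r' (D * a)"
    unfolding T2_def
  proof (intro ballI allI impI)
    fix I J K assume I: "I \<in> Tstar T" and JK: "I @ J \<in> Tstar T" "I @ K \<in> Tstar T"
    have "dist (x (I @ J)) (x (I @ K)) \<le> D * r I" using t2 I JK unfolding T2_def by blast
    also have "\<dots> \<le> D * (a * r' I)" using hi'[OF I] D by (intro mult_left_mono) auto
    finally show "dist (x (I @ J)) (x (I @ K)) \<le> D * a * r' I" by (simp add: mult.assoc)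
  qed
  have T3: "T3 T r' s"
    unfolding T3_def
  proof (intro ballI allI)
    fix I n assume "I \<in> Tstar T"
    have "(\<Sum>J\<in>{J. length J = n \<and> I @ J \<in> Tstar T}. r' (I @ J) powr s) = (\<Sum>J\<in>desc T I n. \<nu> (I @ J))"
      unfolding desc_def rs ..
    also have "\<dots> = r' I powr s" using nuadd[of I n] rs[of I] by simp
    finally show "(\<Sum>J\<in>{J. length J = n \<and> I @ J \<in> Tstar T}. r' (I @ J) powr s) = r' I powr s" .
  qed
  have T4': "T4 T r'"
    unfolding T4_def
  proof (intro allI impI)
    fix \<epsilon> :: real assume e: "0 < \<epsilon>"
    then have "0 < \<epsilon> / a" using a by simp
    then obtain k where k: "\<forall>I\<in>Tstar T. length I \<ge> k \<longrightarrow> r I < \<epsilon> / a" using t4 unfolding T4_def by blast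
    have "\<forall>I\<in>Tstar T. length I \<ge> k \<longrightarrow> r' I < \<epsilon>"
    proof (intro ballI impI)
      fix I assume I: "I \<in> Tstar T" "k \<le> length I"
      then have "r I < \<epsilon> / a" using k by blast
      then have "a * r I < \<epsilon>" using a by (simp add: field_simps)
      then show "r' I < \<epsilon>" using hi[OF I(1)] by linarith
    qed
    then show "\<exists>k. \<forall>I\<in>Tstar T. length I \<ge> k \<longrightarrow> r' I < \<epsilon>" by blast
  qed
  have T5': "T5 N T r' (\<rho> / (a * a))"
    unfolding T5_def
  proof (intro allI impI)
    fix I j assume j: "j < N" "I @ [j] \<in> Tstar T"
    have I: "I \<in> Tstar T" by (rule prefix_closed[OF j(2)])
    have "\<rho> / (a * a) * r' I = (\<rho> * (r' I / a)) / a" using a by (simp add: field_simps)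
    also have "\<dots> \<le> (\<rho> * r I) / a"
      using lo'[OF I] \<rho> a by (intro divide_right_mono mult_left_mono) auto
    also have "\<dots> \<le> r (I @ [j]) / a"
      using t5 j a unfolding T5_def by (intro divide_right_mono) auto
    also have "\<dots> \<le> r' (I @ [j])" by (rule lo[OF j(2)])
    finally show "\<rho> / (a * a) * r' I \<le> r' (I @ [j])" .
  qed
  have "s_tree N T x r' s"
    unfolding s_tree_def
  proof (intro conjI)
    show "\<forall>I\<in>Tstar T. 0 < r' I" using r'pos by blast
    show "\<exists>\<rho> C D. \<rho> > 0 \<and> C > 0 \<and> D > 0 \<and>
        T1 T x r' C \<and> T2 T x r' D \<and> T3 T r' s \<and> T4 T r' \<and> T5 N T r' \<rho>"
      using T1' T2' T3 T4' T5' a \<rho> C D by (intro exI[of _ "\<rho> / (a * a)"] exI[of _ "C / a"] exI[of _ "D * a"]) auto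
  qed
  moreover have "\<forall>I\<in>Tstar T. E powr (-1/s) * r I \<le> r' I \<and> r' I \<le> E powr (1/s) * r I"
    using lo hi unfolding am a_def[symmetric] by (simp add: mult.commute)
  ultimately show ?thesis by blast
qed


theorem mainTheorem6:
  fixes N :: nat and T :: "(nat \<Rightarrow> nat) set"
    and x :: "nat list \<Rightarrow> 'a::metric_space" and r :: "nat list \<Rightarrow> real" and s :: real
  assumes "T \<subseteq> SigmaN N" and "T \<noteq> {}" and "closed T" and "0 < s"
    and "\<forall>I\<in>Tstar T. 0 < r I"
  shows "(s_tree N T x r s \<longrightarrow> T3' T r s 1)
    \<and> (\<forall>\<rho> C D E. 0 < \<rho> \<and> 0 < C \<and> 0 < D \<and> 0 < E \<and>
          T1 T x r C \<and> T2 T x r D \<and> T3' T r s E \<and> T4 T r \<and> T5 N T r \<rho> \<longrightarrow>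
        (\<exists>r'. (\<forall>I\<in>Tstar T. E powr (-1/s) * r I \<le> r' I \<and> r' I \<le> E powr (1/s) * r I)
              \<and> s_tree N T x r' s))"
proof (intro conjI impI allI)
  assume "s_tree N T x r s"
  then show "T3' T r s 1" using partA'[OF assms(1,3)] by blast
next
  fix \<rho> C D E
  assume h: "0 < \<rho> \<and> 0 < C \<and> 0 < D \<and> 0 < E \<and>
          T1 T x r C \<and> T2 T x r D \<and> T3' T r s E \<and> T4 T r \<and> T5 N T r \<rho>"
  show "\<exists>r'. (\<forall>I\<in>Tstar T. E powr (-1/s) * r I \<le> r' I \<and> r' I \<le> E powr (1/s) * r I)
              \<and> s_tree N T x r' s"
    using partB[OF assms(1,4,5)] h by blast
qed

end
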